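(* Martin's axiom for the partial ordering $\mathrm{Fn}(\omega_1,2)$ implies ${\mathrm{stick}}={\mathrm{stick}}'=2^{\aleph_0}$. Further, if $\mathrm{MA}(\mathit{Cohen})$ holds, then also ${\mathrm{stick}}''=2^{\aleph_0}$.
   Context: $\mathrm{Fn}(\kappa,2)$ is the set of functions from a finite subset of $\kappa$ to $2$ ordered by reverse inclusion. Martin's axiom for a partial ordering $P$: for every family of fewer than $2^{\aleph_0}$ dense subsets of $P$ there is a filter on $P$ meeting all of them. $\mathrm{MA}(\mathit{Cohen})$ is Martin's axiom for all partial orderings of the form $\mathrm{Fn}(\kappa,2)$. ${\mathrm{stick}}$ is the least cardinality of $X\subseteq[\omega_1]^{\aleph_0}$ such that every $y\in[\omega_1]^{\aleph_1}$ has a subset in $X$. ${\mathrm{stick}}'$ (resp. ${\mathrm{stick}}''$) is the least cardinal $\kappa\geq\aleph_1$ for which there is $X\subseteq[\kappa]^{\aleph_0}$ with $|X|=\kappa$ such that every $y\in[\kappa]^{\aleph_1}$ (resp. every $y\in[\kappa]^{\kappa}$) has a subset in $X$. *)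

theory Defs
  imports Main
begin

abbreviation continuum :: "nat set rel" where
  "continuum \<equiv> card_of (UNIV :: nat set set)"

abbreviation aleph1 where "aleph1 \<equiv> cardSuc natLeq"

text \<open>Generic forcing notions: a carrier P and an order le (le q p means q extends p).\<close>

definition dense_in :: "'p set \<Rightarrow> ('p \<Rightarrow> 'p \<Rightarrow> bool) \<Rightarrow> 'p set \<Rightarrow> bool" where
  "dense_in P le D \<longleftrightarrow> D \<subseteq> P \<and> (\<forall>p\<in>P. \<exists>q\<in>D. le q p)"

definition filter_in :: "'p set \<Rightarrow> ('p \<Rightarrow> 'p \<Rightarrow> bool) \<Rightarrow> 'p set \<Rightarrow> bool" where
  "filter_in P le G \<longleftrightarrow> G \<subseteq> P \<and> G \<noteq> {}
     \<and> (\<forall>p\<in>G. \<forall>q\<in>P. le p q \<longrightarrow> q \<in> G)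
     \<and> (\<forall>p\<in>G. \<forall>q\<in>G. \<exists>r\<in>G. le r p \<and> le r q)"

definition MA_for :: "'p set \<Rightarrow> ('p \<Rightarrow> 'p \<Rightarrow> bool) \<Rightarrow> bool" where
  "MA_for P le \<longleftrightarrow>
     (\<forall>\<D> :: 'p set set. (card_of \<D>, continuum) \<in> ordLess \<and> (\<forall>D\<in>\<D>. dense_in P le D)
        \<longrightarrow> (\<exists>G. filter_in P le G \<and> (\<forall>D\<in>\<D>. G \<inter> D \<noteq> {})))"

definition Fn :: "'a set \<Rightarrow> ('a \<rightharpoonup> bool) set" where
  "Fn K = {p. finite (dom p) \<and> dom p \<subseteq> K}"

definition Fn_le :: "('a \<rightharpoonup> bool) \<Rightarrow> ('a \<rightharpoonup> bool) \<Rightarrow> bool" where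
  "Fn_le p q \<longleftrightarrow> q \<subseteq>\<^sub>m p"

definition ctbl_subsets :: "'a set \<Rightarrow> 'a set set" where
  "ctbl_subsets K = {x. x \<subseteq> K \<and> (card_of x, natLeq) \<in> ordIso}"

text \<open>X witnesses stick for W (a set of size aleph_1 playing the role of omega_1).\<close>

definition stick_family :: "'a set \<Rightarrow> 'a set set \<Rightarrow> bool" where
  "stick_family W X \<longleftrightarrow> X \<subseteq> ctbl_subsets W \<and>
     (\<forall>y. y \<subseteq> W \<and> (card_of y, aleph1) \<in> ordIso \<longrightarrow> (\<exists>x\<in>X. x \<subseteq> y))"

definition stick'_prop :: "'a set \<Rightarrow> bool" where
  "stick'_prop K \<longleftrightarrow> (aleph1, card_of K) \<in> ordLeq \<and>
     (\<exists>X. X \<subseteq> ctbl_subsets K \<and> (card_of X, card_of K) \<in> ordIso \<and>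
       (\<forall>y. y \<subseteq> K \<and> (card_of y, aleph1) \<in> ordIso \<longrightarrow> (\<exists>x\<in>X. x \<subseteq> y)))"

definition stick''_prop :: "'a set \<Rightarrow> bool" where
  "stick''_prop K \<longleftrightarrow> (aleph1, card_of K) \<in> ordLeq \<and>
     (\<exists>X. X \<subseteq> ctbl_subsets K \<and> (card_of X, card_of K) \<in> ordIso \<and>
       (\<forall>y. y \<subseteq> K \<and> (card_of y, card_of K) \<in> ordIso \<longrightarrow> (\<exists>x\<in>X. x \<subseteq> y)))"

end

theory Submission
  imports Defs "HOL-Library.Nat_Bijection"
begin

unbundle cardinal_syntax

lemma infinite_UNIV_natset: "infinite (UNIV :: nat set set)"
proof
  assume "finite (UNIV :: nat set set)"
  then have "finite (range (\<lambda>n::nat. {n}))" by (rule finite_subset[rotated]) auto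
  then show False using finite_imageD[of "\<lambda>n::nat. {n}" UNIV] by (auto simp: inj_on_def)
qed

lemma natLeq_less_cont: "natLeq <o continuum"
proof -
  have "|UNIV::nat set| <o |Pow (UNIV::nat set)|" by (rule card_of_Pow)
  then have "|UNIV::nat set| <o continuum" by simp
  then show ?thesis using card_of_nat ordIso_symmetric ordIso_ordLess_trans by blast
qed

lemma aleph1_le_cont: "aleph1 \<le>o continuum"
  using cardSuc_least[OF natLeq_Card_order card_of_Card_order natLeq_less_cont] .

lemma natLeq_less_aleph1: "natLeq <o aleph1"
  using cardSuc_greater[OF natLeq_Card_order] .

lemma ctbl_infinite: "x \<in> ctbl_subsets A \<Longrightarrow> infinite x"
  unfolding ctbl_subsets_def
  using infinite_iff_natLeq_ordLeq ordIso_iff_ordLeq by blast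

lemma infinite_has_ctbl: "infinite y \<Longrightarrow> \<exists>x \<in> ctbl_subsets y. True"
proof -
  assume "infinite y"
  then obtain f :: "nat \<Rightarrow> _" where f: "inj f" "range f \<subseteq> y"
    using infinite_countable_subset by blast
  then have "bij_betw f UNIV (range f)" by (simp add: bij_betw_def)
  then have "|UNIV::nat set| =o |range f|" using card_of_ordIso by blast
  then have "|range f| =o natLeq" using card_of_nat ordIso_symmetric ordIso_transitive by blast
  then show ?thesis using f unfolding ctbl_subsets_def by blast
qed

lemma ctbl_mono: "x \<in> ctbl_subsets y \<Longrightarrow> y \<subseteq> K \<Longrightarrow> x \<in> ctbl_subsets K \<and> x \<subseteq> y"
  unfolding ctbl_subsets_def by blast

lemma aleph1_infinite: "|y| =o aleph1 \<Longrightarrow> infinite y"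
proof -
  assume a: "|y| =o aleph1"
  have "natLeq \<le>o aleph1" using natLeq_less_aleph1 by (rule ordLess_imp_ordLeq)
  moreover have "aleph1 \<le>o |y|" using a ordIso_symmetric ordIso_imp_ordLeq by blast
  ultimately have "natLeq \<le>o |y|" by (rule ordLeq_transitive)
  then show ?thesis using infinite_iff_natLeq_ordLeq by blast
qed

lemma cont_infinite: "|y| =o |K| \<Longrightarrow> aleph1 \<le>o |K| \<Longrightarrow> infinite y"
proof -
  assume a: "|y| =o |K|" and b: "aleph1 \<le>o |K|"
  have "natLeq \<le>o aleph1" using natLeq_less_aleph1 by (rule ordLess_imp_ordLeq)
  then have "natLeq \<le>o |K|" using b by (rule ordLeq_transitive)
  moreover have "|K| \<le>o |y|" using a ordIso_symmetric ordIso_imp_ordLeq by blast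
  ultimately have "natLeq \<le>o |y|" by (rule ordLeq_transitive)
  then show ?thesis using infinite_iff_natLeq_ordLeq by blast
qed

lemma ctbl_bound:
  fixes A :: "'a set"
  assumes "|A| \<le>o continuum"
  shows "|ctbl_subsets A| \<le>o continuum"
proof -
  have "\<exists>i :: 'a \<Rightarrow> nat set. inj_on i A \<and> i ` A \<subseteq> UNIV"
    by (subst card_of_ordLeq) (rule assms)
  then obtain i :: "'a \<Rightarrow> nat set" where i: "inj_on i A" by blast
  define hx where "hx x = (SOME h :: nat \<Rightarrow> 'a. bij_betw h UNIV x)" for x
  have hx: "bij_betw (hx x) UNIV x" if "x \<in> ctbl_subsets A" for x
  proof -
    have "|x| =o natLeq" using that unfolding ctbl_subsets_def by blast
    then have "|UNIV::nat set| =o |x|" using card_of_nat ordIso_symmetric ordIso_transitive by blast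
    then obtain h :: "nat \<Rightarrow> 'a" where "bij_betw h UNIV x" using card_of_ordIso by blast
    then show ?thesis unfolding hx_def by (rule someI[of "\<lambda>h. bij_betw h UNIV x"])
  qed
  define F where "F x = prod_encode ` (SIGMA n:UNIV. i (hx x n))" for x
  have memF: "prod_encode (n,m) \<in> F x \<longleftrightarrow> m \<in> i (hx x n)" for x n m
    unfolding F_def by (simp add: inj_image_mem_iff[OF inj_prod_encode])
  have "inj_on F (ctbl_subsets A)"
  proof (rule inj_onI)
    fix x x' assume x: "x \<in> ctbl_subsets A" and x': "x' \<in> ctbl_subsets A" and e: "F x = F x'"
    have sub: "x \<subseteq> A" "x' \<subseteq> A" using x x' unfolding ctbl_subsets_def by auto
    have "hx x n = hx x' n" for n
    proof -
      have "i (hx x n) = i (hx x' n)"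
      proof (rule set_eqI)
        fix m show "m \<in> i (hx x n) \<longleftrightarrow> m \<in> i (hx x' n)"
          using memF[of n m x] memF[of n m x'] e by simp
      qed
      moreover have "hx x n \<in> A" using bij_betwE[OF hx[OF x]] sub(1) by blast
      moreover have "hx x' n \<in> A" using bij_betwE[OF hx[OF x']] sub(2) by blast
      ultimately show ?thesis by (rule inj_onD[OF i])
    qed
    then have hxe: "hx x = hx x'" by (rule ext)
    have "x = hx x ` UNIV" using hx[OF x] by (rule bij_betw_imp_surj_on[symmetric])
    also have "\<dots> = hx x' ` UNIV" by (simp only: hxe)
    also have "\<dots> = x'" using hx[OF x'] by (rule bij_betw_imp_surj_on)
    finally show "x = x'" .
  qed
  then have "\<exists>F :: 'a set \<Rightarrow> nat set. inj_on F (ctbl_subsets A) \<and> F ` ctbl_subsets A \<subseteq> UNIV" by blast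
  then show ?thesis by (subst (asm) card_of_ordLeq)
qed


lemma diag:
  fixes V :: "'a set" and X :: "'a set set"
  assumes V: "|V| =o aleph1" and X: "|X| \<le>o natLeq" and ne: "\<forall>x\<in>X. x \<noteq> {}"
  shows "\<exists>y \<subseteq> V. |y| =o |V| \<and> (\<forall>x\<in>X. \<not> x \<subseteq> y)"
proof -
  define pt where "pt x = (SOME a. a \<in> x)" for x :: "'a set"
  have pt: "pt x \<in> x" if "x \<in> X" for x
    using ne that unfolding pt_def by (metis ex_in_conv someI_ex)
  define S where "S = pt ` X"
  have "|S| \<le>o |X|" unfolding S_def by (rule card_of_image)
  then have "|S| \<le>o natLeq" using X by (rule ordLeq_transitive)
  then have "|S| <o aleph1" using natLeq_less_aleph1 by (rule ordLeq_ordLess_trans)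
  then have S: "|S| <o |V|" using V ordIso_symmetric ordLess_ordIso_trans by blast
  have Vinf: "infinite V" using V by (rule aleph1_infinite)
  have "|V| \<le>o |V - S|"
  proof (rule ccontr)
    assume "\<not> |V| \<le>o |V - S|"
    then have "|V - S| <o |V|" using not_ordLeq_iff_ordLess card_of_Well_order by blast
    then have "|(V - S) \<union> S| <o |V|" using card_of_Un_ordLess_infinite[OF Vinf] S by blast
    moreover have "|V| \<le>o |(V - S) \<union> S|" by (rule card_of_mono1) blast
    ultimately have "|V| <o |V|" using ordLeq_ordLess_trans by blast
    then show False using ordLess_irreflexive by blast
  qed
  moreover have "|V - S| \<le>o |V|" by (rule card_of_mono1) blast
  ultimately have "|V - S| =o |V|" using ordIso_iff_ordLeq by blast
  moreover have "\<not> x \<subseteq> V - S" if "x \<in> X" for x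
    using pt[OF that] that unfolding S_def by blast
  ultimately show ?thesis by blast
qed

definition enc :: "nat set \<Rightarrow> nat set set" where
  "enc S = range (\<lambda>n. insert (Suc (2*n)) ((*) 2 ` S))"

lemma enc_even: "Z \<in> enc S \<Longrightarrow> {k\<in>Z. even k} = (*) 2 ` S"
  unfolding enc_def by auto

lemma enc_ctbl: "enc S \<in> ctbl_subsets UNIV"
proof -
  have "inj (\<lambda>n. insert (Suc (2*n)) ((*) 2 ` S))"
  proof (rule injI)
    fix n m assume "insert (Suc (2*n)) ((*) 2 ` S) = insert (Suc (2*m)) ((*) 2 ` S)"
    then have "Suc (2*n) \<in> insert (Suc (2*m)) ((*) 2 ` S)" by blast
    then show "n = m" by auto presburger
  qed
  then have "bij_betw (\<lambda>n. insert (Suc (2*n)) ((*) 2 ` S)) UNIV (enc S)"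
    unfolding enc_def by (simp add: bij_betw_def)
  then have "|UNIV::nat set| =o |enc S|" using card_of_ordIso by blast
  then have "|enc S| =o natLeq" using card_of_nat ordIso_symmetric ordIso_transitive by blast
  then show ?thesis unfolding ctbl_subsets_def by blast
qed

lemma enc_inj: "inj enc"
proof (rule injI)
  fix S T assume e: "enc S = enc T"
  obtain Z where Z: "Z \<in> enc S" unfolding enc_def by blast
  then have "Z \<in> enc T" using e by simp
  then have "(*) 2 ` S = (*) 2 ` (T::nat set)" using enc_even Z by metis
  then show "S = T" using inj_image_eq_iff[of "(*) (2::nat)"] by (simp add: inj_on_def)
qed

lemma ctbl_UNIV: "|ctbl_subsets (UNIV :: nat set set)| =o continuum"
proof -
  have "|ctbl_subsets (UNIV :: nat set set)| \<le>o continuum"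
    by (rule ctbl_bound) (rule ordLeq_refl[OF card_of_Card_order])
  moreover have "continuum \<le>o |ctbl_subsets (UNIV :: nat set set)|"
  proof -
    have "\<exists>f :: nat set \<Rightarrow> nat set set. inj_on f UNIV \<and> f ` UNIV \<subseteq> ctbl_subsets UNIV"
      using enc_inj enc_ctbl by blast
    then show ?thesis by (subst (asm) card_of_ordLeq)
  qed
  ultimately show ?thesis using ordIso_iff_ordLeq by blast
qed


lemma Fn_upd: "p \<in> Fn W \<Longrightarrow> b \<in> W \<Longrightarrow> b \<notin> dom p \<Longrightarrow> p(b \<mapsto> v) \<in> Fn W \<and> Fn_le (p(b \<mapsto> v)) p"
  unfolding Fn_def Fn_le_def map_le_def by auto

lemma extend_infinite:
  assumes p: "p \<in> Fn W" and B: "infinite B" "B \<subseteq> W"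
  shows "\<exists>b\<in>B. b \<notin> dom p"
proof (rule ccontr)
  assume "\<not> ?thesis"
  then have "B \<subseteq> dom p" by blast
  moreover have "finite (dom p)" using p unfolding Fn_def by blast
  ultimately show False using B finite_subset by blast
qed

lemma filter_compat:
  assumes G: "filter_in P Fn_le G" and p: "p \<in> G" and q: "q \<in> G"
    and pb: "p b = Some u" and qb: "q b = Some v"
  shows "u = v"
proof -
  obtain r where "r \<in> G" "Fn_le r p" "Fn_le r q" using G p q unfolding filter_in_def by blast
  then have "r b = Some u" "r b = Some v" using pb qb unfolding Fn_le_def map_le_def
    by (metis domI)+
  then show ?thesis by simp
qed

lemma MA_avoid:
  fixes W :: "'w set" and f :: "'w \<Rightarrow> 'a" and X :: "'a set set"
  assumes inf: "infinite W" and MA: "MA_for (Fn W) Fn_le"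
    and Wc: "|W| <o continuum" and Xc: "|X| <o continuum"
    and Xinf: "\<forall>x\<in>X. infinite x" and inj: "inj_on f W"
  shows "\<exists>y \<subseteq> f ` W. |y| =o |W| \<and> (\<forall>x\<in>X. \<not> x \<subseteq> y)"
proof -
  have "|UNIV::nat set| \<le>o |W|"
    using inf infinite_iff_natLeq_ordLeq card_of_nat ordIso_ordLeq_trans by blast
  then have "|W \<times> (UNIV::nat set)| =o |W|" using card_of_Times_infinite[OF inf] by blast
  then obtain h where h: "bij_betw h (W \<times> (UNIV::nat set)) W" using card_of_ordIso by blast
  have hW: "h (a,n) \<in> W" if "a \<in> W" for a n using h that by (auto simp: bij_betw_def)
  have hinj: "h (a,n) = h (a',n') \<Longrightarrow> a \<in> W \<Longrightarrow> a' \<in> W \<Longrightarrow> a = a' \<and> n = n'" for a a' n n'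
    using h unfolding bij_betw_def inj_on_def by blast
  define XV where "XV = {x\<in>X. x \<subseteq> f ` W}"
  define Dx where "Dx x = {p \<in> Fn W. \<exists>b\<in>W. f b \<in> x \<and> p b = Some False}" for x
  define Ea where "Ea a = {p \<in> Fn W. \<exists>n. p (h (a,n)) = Some True}" for a
  define DD where "DD = Dx ` XV \<union> Ea ` W"
  have cinf: "infinite (Field continuum)" by (simp add: Field_card_of infinite_UNIV_natset)
  have "|Dx ` XV| <o continuum"
  proof -
    have "|Dx ` XV| \<le>o |XV|" by (rule card_of_image)
    moreover have "|XV| \<le>o |X|" unfolding XV_def by (rule card_of_mono1) blast
    ultimately show ?thesis using Xc ordLeq_transitive ordLeq_ordLess_trans by blast
  qed
  moreover have "|Ea ` W| <o continuum"
    using card_of_image Wc ordLeq_ordLess_trans by blast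
  ultimately have DDc: "|DD| <o continuum" unfolding DD_def
    using card_of_Un_ordLess_infinite_Field[OF cinf card_of_Card_order] by blast
  have DDd: "\<forall>D\<in>DD. dense_in (Fn W) Fn_le D"
  proof
    fix D assume "D \<in> DD"
    then consider x where "x \<in> XV" "D = Dx x" | a where "a \<in> W" "D = Ea a"
      unfolding DD_def by blast
    then show "dense_in (Fn W) Fn_le D"
    proof cases
      case 1
      have xs: "x \<subseteq> f ` W" "infinite x" using 1 Xinf unfolding XV_def by auto
      define B where "B = {b\<in>W. f b \<in> x}"
      have "x \<subseteq> f ` B" using xs unfolding B_def by blast
      then have Binf: "infinite B" using xs finite_surj by blast
      show ?thesis unfolding dense_in_def
      proof (intro conjI ballI)
        show "D \<subseteq> Fn W" using 1 unfolding Dx_def by blast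
      next
        fix p assume p: "p \<in> Fn W"
        obtain b where b: "b \<in> B" "b \<notin> dom p" using extend_infinite[OF p Binf] B_def by blast
        then have "b \<in> W" "f b \<in> x" unfolding B_def by auto
        then have "p(b \<mapsto> False) \<in> D \<and> Fn_le (p(b \<mapsto> False)) p"
          using Fn_upd[OF p _ b(2)] 1 unfolding Dx_def by auto
        then show "\<exists>q\<in>D. Fn_le q p" by blast
      qed
    next
      case 2
      define B where "B = range (\<lambda>n. h (a,n))"
      have "inj (\<lambda>n. h (a,n))" using hinj 2 by (auto simp: inj_on_def)
      then have Binf: "infinite B" unfolding B_def using finite_imageD by blast
      have BW: "B \<subseteq> W" unfolding B_def using hW 2 by blast
      show ?thesis unfolding dense_in_def
      proof (intro conjI ballI)
        show "D \<subseteq> Fn W" using 2 unfolding Ea_def by blast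
      next
        fix p assume p: "p \<in> Fn W"
        obtain b where b: "b \<in> B" "b \<notin> dom p" using extend_infinite[OF p Binf BW] by blast
        then obtain n where n: "b = h (a,n)" unfolding B_def by blast
        have "p(b \<mapsto> True) \<in> D \<and> Fn_le (p(b \<mapsto> True)) p"
          using Fn_upd[OF p _ b(2)] b BW 2 n unfolding Ea_def by auto
        then show "\<exists>q\<in>D. Fn_le q p" by blast
      qed
    qed
  qed
  obtain G where G: "filter_in (Fn W) Fn_le G" and meet: "\<forall>D\<in>DD. G \<inter> D \<noteq> {}"
    using MA[unfolded MA_for_def, rule_format, OF conjI[OF DDc DDd]] by blast
  define y0 where "y0 = {b\<in>W. \<exists>p\<in>G. p b = Some True}"
  define y where "y = f ` y0"
  have ysub: "y \<subseteq> f ` W" unfolding y_def y0_def by blast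
  have avoid: "\<not> x \<subseteq> y" if x: "x \<in> X" for x
  proof
    assume xy: "x \<subseteq> y"
    then have "x \<in> XV" using x ysub unfolding XV_def by blast
    then have "G \<inter> Dx x \<noteq> {}" using meet unfolding DD_def by blast
    then obtain p b where p: "p \<in> G" "b \<in> W" "f b \<in> x" "p b = Some False"
      unfolding Dx_def by blast
    then have "f b \<in> y" using xy by blast
    then obtain b' where b': "b' \<in> y0" "f b = f b'" unfolding y_def by blast
    then have "b = b'" using inj p(2) unfolding y0_def inj_on_def by blast
    then obtain q where "q \<in> G" "q b = Some True" using b' unfolding y0_def by blast
    then show False using filter_compat[OF G p(1) _ p(4)] by blast
  qed
  have "|W| \<le>o |y0|"
  proof -
    have ex: "\<exists>n. h (a,n) \<in> y0" if a: "a \<in> W" for a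
    proof -
      have "G \<inter> Ea a \<noteq> {}" using meet a unfolding DD_def by blast
      then obtain p n where "p \<in> G" "p (h (a,n)) = Some True" unfolding Ea_def by blast
      then show ?thesis using hW[OF a] unfolding y0_def by blast
    qed
    define c where "c a = h (a, SOME n. h (a,n) \<in> y0)" for a
    have c: "c a \<in> y0" if "a \<in> W" for a
      unfolding c_def using ex[OF that] by (rule someI_ex)
    have "inj_on c W" unfolding inj_on_def c_def using hinj by blast
    then have "\<exists>c. inj_on c W \<and> c ` W \<subseteq> y0" using c by blast
    then show ?thesis by (subst (asm) card_of_ordLeq)
  qed
  moreover have "|y0| \<le>o |W|" unfolding y0_def by (rule card_of_mono1) blast
  ultimately have "|y0| =o |W|" using ordIso_iff_ordLeq by blast
  moreover have "|y| =o |y0|"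
  proof -
    have "inj_on f y0" using inj unfolding y0_def by (rule inj_on_subset) blast
    then have "bij_betw f y0 y" unfolding y_def by (simp add: bij_betw_def)
    then show ?thesis using card_of_ordIso ordIso_symmetric by blast
  qed
  ultimately have "|y| =o |W|" using ordIso_transitive by blast
  then show ?thesis using ysub avoid by blast
qed


lemma avoid1:
  fixes W :: "'w set" and V :: "'a set" and X :: "'a set set"
  assumes W: "|W| =o aleph1" and MA: "MA_for (Fn W) Fn_le"
    and V: "|V| =o aleph1" and Xc: "|X| <o continuum" and Xinf: "\<forall>x\<in>X. infinite x"
  shows "\<exists>y \<subseteq> V. |y| =o aleph1 \<and> (\<forall>x\<in>X. \<not> x \<subseteq> y)"
proof (cases "aleph1 <o continuum")
  case True
  have "|W| =o |V|" using W V ordIso_symmetric ordIso_transitive by blast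
  then obtain f where f: "bij_betw f W V" using card_of_ordIso by blast
  have Wc: "|W| <o continuum" using W True ordIso_ordLess_trans by blast
  obtain y where "y \<subseteq> f ` W" "|y| =o |W|" "\<forall>x\<in>X. \<not> x \<subseteq> y"
    using MA_avoid[OF aleph1_infinite[OF W] MA Wc Xc Xinf] f unfolding bij_betw_def by blast
  moreover have "f ` W = V" using f by (simp add: bij_betw_def)
  ultimately show ?thesis using W ordIso_transitive by blast
next
  case False
  have "Well_order aleph1"
    using cardSuc_Card_order[OF natLeq_Card_order] card_order_on_well_order_on by blast
  then have "(\<not> aleph1 <o continuum) = (continuum \<le>o aleph1)"
    by (rule not_ordLess_iff_ordLeq[OF card_of_Well_order])
  then have "continuum \<le>o aleph1" using False by simp
  then have "|X| <o aleph1" by (rule ordLess_ordLeq_trans[OF Xc])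
  moreover have "( |X| <o aleph1) = ( |X| \<le>o natLeq)"
    by (rule cardSuc_ordLeq_ordLess[OF natLeq_Card_order card_of_Card_order])
  ultimately have X: "|X| \<le>o natLeq" by simp
  have "\<forall>x\<in>X. x \<noteq> {}" using Xinf by auto
  then obtain y where y: "y \<subseteq> V" "|y| =o |V|" "\<forall>x\<in>X. \<not> x \<subseteq> y" using diag[OF V X] by blast
  have "|y| =o aleph1" using y(2) V by (rule ordIso_transitive)
  then show ?thesis using y by blast
qed

lemma ctbl_infinite_all: "X \<subseteq> ctbl_subsets K \<Longrightarrow> \<forall>x\<in>X. infinite x"
  using ctbl_infinite by blast

lemma nle_card: "\<not> |B| \<le>o |A| \<Longrightarrow> |A| <o |B|"
  by (simp add: not_ordLeq_iff_ordLess[OF card_of_Well_order card_of_Well_order])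

lemma catch: "infinite y \<Longrightarrow> y \<subseteq> K \<Longrightarrow> \<exists>x\<in>ctbl_subsets K. x \<subseteq> y"
proof -
  assume "infinite y" "y \<subseteq> K"
  then obtain x where "x \<in> ctbl_subsets y" using infinite_has_ctbl by blast
  then show ?thesis using ctbl_mono \<open>y \<subseteq> K\<close> by blast
qed

lemma sf_ctbl: "stick_family W (ctbl_subsets W)"
  unfolding stick_family_def
proof (intro conjI allI impI)
  fix y assume "y \<subseteq> W \<and> |y| =o aleph1"
  then show "\<exists>x\<in>ctbl_subsets W. x \<subseteq> y" using catch aleph1_infinite by blast
qed simp

lemma card_eq: "|A| \<le>o |B| \<Longrightarrow> |B| \<le>o |A| \<Longrightarrow> |A| =o |B|"
  using ordIso_iff_ordLeq by blast

theorem fact1p3: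
  fixes W :: "'w set"
  assumes "(card_of W, aleph1) \<in> ordIso"
  shows
    "(MA_for (Fn W) Fn_le \<longrightarrow>
        ((\<exists>X. stick_family W X \<and> (card_of X, continuum) \<in> ordIso) \<and>
         (\<forall>X. stick_family W X \<longrightarrow> (continuum, card_of X) \<in> ordLeq)) \<and>
        (stick'_prop (UNIV :: nat set set) \<and>
         (\<forall>K :: 'k set. stick'_prop K \<longrightarrow> (continuum, card_of K) \<in> ordLeq)))
     \<and>
     ((\<forall>K :: 'c set. MA_for (Fn K) Fn_le) \<longrightarrow>
        stick''_prop (UNIV :: nat set set) \<and>
        (\<forall>K :: 'c set. stick''_prop K \<longrightarrow> (continuum, card_of K) \<in> ordLeq))"
proof (intro conjI impI)
  have W: "|W| =o aleph1" using assms by simp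
  {
    assume MA: "MA_for (Fn W) Fn_le"
    show A2: "\<forall>X. stick_family W X \<longrightarrow> continuum \<le>o |X|"
    proof (intro allI impI)
      fix X assume sf: "stick_family W X"
      show "continuum \<le>o |X|"
      proof (rule ccontr)
        assume "\<not> continuum \<le>o |X|"
        then have Xc: "|X| <o continuum" by (rule nle_card)
        have "X \<subseteq> ctbl_subsets W" using sf unfolding stick_family_def by blast
        then have "\<forall>x\<in>X. infinite x" by (rule ctbl_infinite_all)
        then obtain y where y: "y \<subseteq> W" "|y| =o aleph1" "\<forall>x\<in>X. \<not> x \<subseteq> y"
          using avoid1[OF W MA W Xc] by blast
        have "\<exists>x\<in>X. x \<subseteq> y" using sf y(1,2) unfolding stick_family_def by blast
        then show False using y(3) by blast
      qed
    qed
    have "|W| \<le>o continuum" using W aleph1_le_cont by (rule ordIso_ordLeq_trans)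
    then have "|ctbl_subsets W| \<le>o continuum" by (rule ctbl_bound)
    moreover have "continuum \<le>o |ctbl_subsets W|" using A2 sf_ctbl by blast
    ultimately have "|ctbl_subsets W| =o continuum" by (rule card_eq)
    then show "\<exists>X. stick_family W X \<and> |X| =o continuum" using sf_ctbl by blast
    show "stick'_prop (UNIV :: nat set set)"
      unfolding stick'_prop_def
    proof (intro conjI exI)
      show "aleph1 \<le>o continuum" by (rule aleph1_le_cont)
      show "ctbl_subsets UNIV \<subseteq> ctbl_subsets (UNIV :: nat set set)" by simp
      show "|ctbl_subsets (UNIV :: nat set set)| =o |UNIV :: nat set set|" by (rule ctbl_UNIV)
      show "\<forall>y. y \<subseteq> UNIV \<and> |y| =o aleph1 \<longrightarrow> (\<exists>x\<in>ctbl_subsets (UNIV :: nat set set). x \<subseteq> y)"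
        using catch aleph1_infinite by blast
    qed
    show "\<forall>K :: 'k set. stick'_prop K \<longrightarrow> continuum \<le>o |K|"
    proof (intro allI impI)
      fix K :: "'k set" assume sp: "stick'_prop K"
      then obtain X where X: "X \<subseteq> ctbl_subsets K" "|X| =o |K|"
        "\<forall>y. y \<subseteq> K \<and> |y| =o aleph1 \<longrightarrow> (\<exists>x\<in>X. x \<subseteq> y)" and a1: "aleph1 \<le>o |K|"
        unfolding stick'_prop_def by blast
      show "continuum \<le>o |K|"
      proof (rule ccontr)
        assume "\<not> continuum \<le>o |K|"
        then have "|K| <o continuum" by (rule nle_card)
        then have Xc: "|X| <o continuum" using X(2) ordIso_ordLess_trans by blast
        have "|W| \<le>o |K|" using W a1 by (rule ordIso_ordLeq_trans)
        then have "\<exists>g. inj_on g W \<and> g ` W \<subseteq> K" by (subst card_of_ordLeq)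
        then obtain g where g: "inj_on g W" "g ` W \<subseteq> K" by blast
        then have "bij_betw g W (g ` W)" by (simp add: bij_betw_def)
        then have "|W| =o |g ` W|" by (subst card_of_ordIso[symmetric]) blast
        then have "|g ` W| =o |W|" by (rule ordIso_symmetric)
        then have gW: "|g ` W| =o aleph1" using W by (rule ordIso_transitive)
        obtain y where y: "y \<subseteq> g ` W" "|y| =o aleph1" "\<forall>x\<in>X. \<not> x \<subseteq> y"
          using avoid1[OF W MA gW Xc ctbl_infinite_all[OF X(1)]] by blast
        have "y \<subseteq> K" using y(1) g(2) by blast
        then have "\<exists>x\<in>X. x \<subseteq> y" using X(3) y(2) by blast
        then show False using y(3) by blast
      qed
    qed
  }
  {
    assume MA: "\<forall>K :: 'c set. MA_for (Fn K) Fn_le"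
    have nc: "natLeq \<le>o continuum" using natLeq_less_cont by (rule ordLess_imp_ordLeq)
    have cinf: "infinite y" if "|y| =o continuum" for y :: "nat set set"
    proof -
      have "continuum \<le>o |y|" by (rule ordIso_imp_ordLeq[OF ordIso_symmetric[OF that]])
      then have "natLeq \<le>o |y|" by (rule ordLeq_transitive[OF nc])
      then show ?thesis using infinite_iff_natLeq_ordLeq by blast
    qed
    show "stick''_prop (UNIV :: nat set set)"
      unfolding stick''_prop_def
    proof (intro conjI exI)
      show "aleph1 \<le>o continuum" by (rule aleph1_le_cont)
      show "ctbl_subsets UNIV \<subseteq> ctbl_subsets (UNIV :: nat set set)" by simp
      show "|ctbl_subsets (UNIV :: nat set set)| =o |UNIV :: nat set set|" by (rule ctbl_UNIV)
      show "\<forall>y. y \<subseteq> UNIV \<and> |y| =o continuum \<longrightarrow> (\<exists>x\<in>ctbl_subsets (UNIV :: nat set set). x \<subseteq> y)"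
      proof (intro allI impI)
        fix y :: "nat set set" assume "y \<subseteq> UNIV \<and> |y| =o continuum"
        then have "infinite y" using cinf by blast
        then show "\<exists>x\<in>ctbl_subsets (UNIV :: nat set set). x \<subseteq> y" by (rule catch) simp
      qed
    qed
    show "\<forall>K :: 'c set. stick''_prop K \<longrightarrow> continuum \<le>o |K|"
    proof (intro allI impI)
      fix K :: "'c set" assume sp: "stick''_prop K"
      then obtain X where X: "X \<subseteq> ctbl_subsets K" "|X| =o |K|"
        "\<forall>y. y \<subseteq> K \<and> |y| =o |K| \<longrightarrow> (\<exists>x\<in>X. x \<subseteq> y)" and a1: "aleph1 \<le>o |K|"
        unfolding stick''_prop_def by blast
      show "continuum \<le>o |K|"
      proof (rule ccontr)
        assume "\<not> continuum \<le>o |K|"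
        then have Kc: "|K| <o continuum" by (rule nle_card)
        then have Xc: "|X| <o continuum" using X(2) ordIso_ordLess_trans by blast
        have Kinf: "infinite K" using cont_infinite[OF ordIso_refl[OF card_of_Card_order] a1] .
        have MAK: "MA_for (Fn K) Fn_le" by (rule spec[OF MA])
        obtain y where y: "y \<subseteq> id ` K" "|y| =o |K|" "\<forall>x\<in>X. \<not> x \<subseteq> y"
          using MA_avoid[OF Kinf MAK Kc Xc ctbl_infinite_all[OF X(1)] inj_on_id] by blast
        have "y \<subseteq> K" using y(1) by simp
        then have "\<exists>x\<in>X. x \<subseteq> y" using X(3) y(2) by blast
        then show False using y(3) by blast
      qed
    qed
  }
qed

end
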